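(* Let $p\geq 2$ be an even integer and let $U_p=\bigcup_{n\in 2\mathbb Z_+}\mathbb Z_p^n$. Let $\tau\in\{1,\ldots,p\}$ be such that $\tau\equiv 0\pmod 2$, $\tau\mid p$ and $p/\tau\equiv 0\pmod 2$. Let $\boldsymbol a,\boldsymbol b\in U_p$ be equivalent (in the sense defined in the context). Then $\mu_{p,\tau}(\boldsymbol a)=\mu_{p,\tau}(\boldsymbol b)$.
   Context: $\mathbb Z_+$ denotes the positive integers and $\mathbb Z_p=\mathbb Z/p\mathbb Z$. Two elements of $U_p$ are called equivalent if they are related by a finite sequence of the following transformations of $(a_1,\ldots,a_n)\in\mathbb Z_p^n$ ($n$ even): (Op1) $(a_1,\ldots,a_n)\to(a_2,\ldots,a_n,a_1)$; (Op2) $(a_1,\ldots,a_n)\to(a, a_2+(-1)^2(a_1-a),\ldots,a_i+(-1)^i(a_1-a),\ldots,a_n+(-1)^n(a_1-a))$ for any $a\in\mathbb Z_p$; (Op3) $(a_1,\ldots,a_n)\to(a, a_1-a_2+a,\ldots,a_1-a_i+a,\ldots,a_1-a_n+a)$ for any $a\in\mathbb Z_p$; (Op4) $(a_1,\ldots,a_n)\to(a_1,-a_1+a_2+a_3,a_3,\ldots,a_n)$ when $n>3$. For $\boldsymbol a=(a_1,\ldots,a_n)\in U_p$, $\tau_p(\boldsymbol a)$ is the maximum of all $k\in\{1,\ldots,p\}$ with $k\mid p$ and $a_1+a_2\equiv a_2+a_3\equiv\cdots\equiv a_n+a_1\pmod k$. For an even integer $q\ge 2$ and a tuple $(b_1,\ldots,b_m)$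 of elements of $\mathbb Z_q$, let $E$ (resp. $O$) count the number of entries that are even (resp. odd), and define $\mu_q(b_1,\ldots,b_m)=E(b_1+b_2,\ldots,b_{m-1}+b_m,b_m+b_1)-O(b_1+b_2,\ldots,b_{m-1}+b_m,b_m+b_1)$. Define $\mu_{p,\tau}:U_p\to\mathbb Z\cup\{\infty\}$ as follows. If $\tau_p(\boldsymbol a)\neq\tau$, then $\mu_{p,\tau}(\boldsymbol a)=\infty$. If $\tau_p(\boldsymbol a)=\tau$, then $a_{2j-1}-a_1$ and $a_{2j}-a_2$ are divisible by $\tau$ in $\mathbb Z_p$ for all $j$, and dividing by $\tau$ gives well-defined elements of $\mathbb Z_{p/\tau}$; set $\mu_{p,\tau}(\boldsymbol a)=\left|\mu_{p/\tau}\left(\frac{a_1-a_1}{\tau},\frac{a_2-a_2}{\tau},\frac{a_3-a_1}{\tau},\frac{a_4-a_2}{\tau},\ldots,\frac{a_{2j-1}-a_1}{\tau},\frac{a_{2j}-a_2}{\tau},\ldots,\frac{a_{n-1}-a_1}{\tau},\frac{a_n-a_2}{\tau}\right)\right|$, i.e. odd-indexed entries have $a_1$ subtracted and even-indexed entries have $a_2$ subtracted. *)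

theory Defs
  imports Main "HOL-Library.Extended_Nat"
begin

text \<open>Elements of Z_p are represented by integers in {0..<p}; a tuple
(a_1,...,a_n) is an int list (0-based: list index j is a_{j+1}).\<close>

definition Up :: "int \<Rightarrow> int list set" where
  "Up p = {xs. xs \<noteq> [] \<and> even (length xs) \<and> set xs \<subseteq> {0..<p}}"

definition op_step :: "int \<Rightarrow> int list \<Rightarrow> int list \<Rightarrow> bool" where
  "op_step p xs ys \<longleftrightarrow> xs \<in> Up p \<and>
     ( ys = rotate1 xs
     \<or> (\<exists>a::int. ys = map (\<lambda>i. (xs ! i + (-1) ^ (i + 1) * (xs ! 0 - a)) mod p) [0..<length xs])
     \<or> (\<exists>a::int. ys = map (\<lambda>i. (xs ! 0 - xs ! i + a) mod p) [0..<length xs])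
     \<or> (length xs > 3 \<and> ys = xs[1 := (- (xs ! 0) + xs ! 1 + xs ! 2) mod p]))"

definition equivalent :: "int \<Rightarrow> int list \<Rightarrow> int list \<Rightarrow> bool" where
  "equivalent p = equivclp (op_step p)"

definition cyc_sums :: "int list \<Rightarrow> int list" where
  "cyc_sums xs = map (\<lambda>i. xs ! i + xs ! ((i + 1) mod length xs)) [0..<length xs]"

definition tau_p :: "int \<Rightarrow> int list \<Rightarrow> int" where
  "tau_p p xs = Max {k \<in> {1..p}. k dvd p \<and>
      (\<forall>i < length xs. cyc_sums xs ! i mod k = cyc_sums xs ! 0 mod k)}"

definition mu_q :: "int \<Rightarrow> int list \<Rightarrow> int" where
  "mu_q q bs = int (length (filter (\<lambda>s. even (s mod q)) (cyc_sums bs)))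
             - int (length (filter (\<lambda>s. odd (s mod q)) (cyc_sums bs)))"

definition mu_p_tau :: "int \<Rightarrow> int \<Rightarrow> int list \<Rightarrow> enat" where
  "mu_p_tau p \<tau> xs = (if tau_p p xs \<noteq> \<tau> then \<infinity>
     else enat (nat \<bar>mu_q (p div \<tau>)
        (map (\<lambda>i. ((xs ! i - xs ! (i mod 2)) mod p) div \<tau>) [0..<length xs])\<bar>))"

end

theory Submission
  imports Defs
begin

definition cs :: "int list \<Rightarrow> nat \<Rightarrow> int" where
  "cs x i = x!i + x!((i+1) mod length x)"
definition DD :: "int list \<Rightarrow> nat \<Rightarrow> int" where
  "DD x i = cs x i - cs x 0"
definition PP :: "int \<Rightarrow> int list \<Rightarrow> bool" where
  "PP k x = (\<forall>i<length x. k dvd DD x i)"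
definition gg :: "int \<Rightarrow> int \<Rightarrow> int" where
  "gg t v = (if 2*t dvd v then 1 else -1)"
definition WW :: "int \<Rightarrow> int list \<Rightarrow> int" where
  "WW t x = (\<Sum>i<length x. gg t (DD x i))"

lemma modp: "(p::int) dvd (v mod p - v)"
  by (metis dvd_minus_iff dvd_triv_left minus_diff_eq minus_mod_eq_mult_div)

lemma tau_eq:
  assumes "length x > 0"
  shows "tau_p p x = Max {k\<in>{1..p}. k dvd p \<and> PP k x}"
proof -
  have "\<And>k. (\<forall>i < length x. cyc_sums x ! i mod k = cyc_sums x ! 0 mod k) \<longleftrightarrow> PP k x"
    using assms by (simp add: cyc_sums_def PP_def DD_def cs_def mod_eq_dvd_iff)
  then show ?thesis unfolding tau_p_def by simp
qed

lemma tau_PP: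
  assumes "length x > 0" "p \<ge> 1" "tau_p p x = \<tau>"
  shows "PP \<tau> x" "\<tau> dvd p"
proof -
  let ?S = "{k\<in>{1..p}. k dvd p \<and> PP k x}"
  have "finite ?S" by (rule finite_subset[of _ "{1..p}"]) auto
  moreover have "1 \<in> ?S" using assms by (auto simp: PP_def)
  ultimately have "Max ?S \<in> ?S" using Max_in by blast
  then show "PP \<tau> x" "\<tau> dvd p" using assms tau_eq by auto
qed

lemma dvd_iff_diff: "(k::int) dvd a - b \<Longrightarrow> (k dvd a \<longleftrightarrow> k dvd b)"
  by (metis diff_add_cancel dvd_add_right_iff)

lemma filter_count:
  "int (length (filter P l)) - int (length (filter (\<lambda>s. \<not> P s) l)) = sum_list (map (\<lambda>s. if P s then 1 else -1) l)"
  by (induction l) auto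

lemma par_same:
  assumes "PP \<tau> x" "i < length x"
  shows "\<tau> dvd x!i - x!(i mod 2)"
  using assms(2)
proof (induction i rule: less_induct)
  case (less i)
  show ?case
  proof (cases "i < 2")
    case True
    then show ?thesis by (cases i) auto
  next
    case False
    let ?n = "length x"
    have a: "\<tau> dvd DD x (i-2)" "\<tau> dvd DD x (i-1)" using assms(1) less.prems False by (auto simp: PP_def)
    have m1: "(i - 2 + 1) mod ?n = i - 1" "(i - 1 + 1) mod ?n = i" using less.prems False by auto
    have "\<tau> dvd DD x (i-1) - DD x (i-2)" using a by simp
    moreover have "DD x (i-1) - DD x (i-2) = x!i - x!(i-2)"
      unfolding DD_def cs_def m1 by simp
    ultimately have b: "\<tau> dvd x!i - x!(i-2)" by simp
    have c: "\<tau> dvd x!(i-2) - x!((i-2) mod 2)" using less False by auto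
    have "(i-2) mod 2 = i mod 2" using False by presburger
    then show ?thesis using dvd_add[OF b c] by simp
  qed
qed


lemma two_tau_dvd:
  assumes "(\<tau>::int) dvd p" "even (p div \<tau>)"
  shows "2*\<tau> dvd p"
proof -
  obtain q where q: "p = \<tau> * q" using assms(1) by blast
  show ?thesis
  proof (cases "\<tau> = 0")
    case True then show ?thesis using q by simp
  next
    case False
    then have "p div \<tau> = q" using q by simp
    then obtain m where "q = 2*m" using assms(2) by blast
    then show ?thesis using q by (simp add: mult.assoc mult.left_commute)
  qed
qed

lemma mod2_suc_mod:
  assumes "even (n::nat)"
  shows "((i+1) mod n) mod 2 = (i+1) mod 2"
  using assms by (simp add: mod_mod_cancel)

lemma mu_term:
  assumes "even p" "\<tau> > 0" "\<tau> dvd p" "even (p div \<tau>)" "even (length x)" "length x \<ge> 2" "PP \<tau> x"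
    and i: "i < length x"
  defines "bs \<equiv> map (\<lambda>i. ((x!i - x!(i mod 2)) mod p) div \<tau>) [0..<length x]"
  shows "(if even ((bs!i + bs!((i+1) mod length x)) mod (p div \<tau>)) then 1 else -1) = gg \<tau> (DD x i)"
proof -
  let ?n = "length x"
  let ?j = "(i+1) mod ?n"
  have j: "?j < ?n" using assms(6) by (intro mod_less_divisor) linarith
  define di where "di = (x!i - x!(i mod 2)) mod p"
  define dj where "dj = (x!?j - x!(?j mod 2)) mod p"
  have bi: "bs!i = di div \<tau>" using i by (simp add: bs_def di_def)
  have bj: "bs!?j = dj div \<tau>" using j by (simp add: bs_def dj_def)
  have ti: "\<tau> dvd di" unfolding di_def using par_same[OF assms(7) i] assms(3) by (simp add: dvd_mod)
  have tj: "\<tau> dvd dj" unfolding dj_def using par_same[OF assms(7) j] assms(3) by (simp add: dvd_mod)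
  have e: "\<tau> * (bs!i + bs!?j) = di + dj" using ti tj bi bj by (simp add: distrib_left)
  have pm: "x!(i mod 2) + x!(?j mod 2) = x!0 + x!1"
    using mod2_suc_mod[OF assms(5), of i] by (cases "even i") (auto simp: mod2_eq_if split: if_splits)
  have c0: "cs x 0 = x!0 + x!1" using assms(6) by (simp add: cs_def)
  have "p dvd (di + dj) - DD x i"
  proof -
    have "p dvd (di - (x!i - x!(i mod 2))) + (dj - (x!?j - x!(?j mod 2)))"
      unfolding di_def dj_def by (intro dvd_add modp)
    moreover have "(di - (x!i - x!(i mod 2))) + (dj - (x!?j - x!(?j mod 2))) = (di + dj) - DD x i"
      unfolding DD_def c0 using pm by (simp add: cs_def)
    ultimately show ?thesis by metis
  qed
  have tt: "2*\<tau> dvd p" using two_tau_dvd assms by blast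
  have "2*\<tau> dvd DD x i \<longleftrightarrow> 2*\<tau> dvd di + dj"
    using dvd_iff_diff[OF dvd_trans[OF tt \<open>p dvd di + dj - DD x i\<close>]] by simp
  also have "\<dots> \<longleftrightarrow> \<tau>*2 dvd \<tau> * (bs!i + bs!?j)" using e by (simp add: mult.commute)
  also have "\<dots> \<longleftrightarrow> 2 dvd (bs!i + bs!?j)" using assms(2) by (simp add: dvd_times_left_cancel_iff)
  also have "\<dots> \<longleftrightarrow> even ((bs!i + bs!?j) mod (p div \<tau>))"
    using assms(4) by (simp add: dvd_mod_iff)
  finally show ?thesis unfolding gg_def by simp
qed


lemma mu_eq:
  assumes "even p" "\<tau> > 0" "\<tau> dvd p" "even (p div \<tau>)" "even (length x)" "length x \<ge> 2" "PP \<tau> x"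
  shows "mu_q (p div \<tau>) (map (\<lambda>i. ((x!i - x!(i mod 2)) mod p) div \<tau>) [0..<length x]) = WW \<tau> x"
proof -
  define bs where "bs = map (\<lambda>i. ((x!i - x!(i mod 2)) mod p) div \<tau>) [0..<length x]"
  let ?h = "\<lambda>s. if even (s mod (p div \<tau>)) then 1 else (-1::int)"
  have lb: "length bs = length x" by (simp add: bs_def)
  have "mu_q (p div \<tau>) bs = sum_list (map ?h (cyc_sums bs))"
    unfolding mu_q_def by (rule filter_count)
  also have "\<dots> = sum_list (map (\<lambda>i. ?h (bs!i + bs!((i+1) mod length x))) [0..<length x])"
    by (simp add: cyc_sums_def lb comp_def)
  also have "\<dots> = (\<Sum>i<length x. ?h (bs!i + bs!((i+1) mod length x)))"
    by (simp add: sum_set_upt_conv_sum_list_nat[symmetric] atLeast0LessThan)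
  also have "\<dots> = (\<Sum>i<length x. gg \<tau> (DD x i))"
    using mu_term[OF assms] unfolding bs_def by (intro sum.cong) auto
  finally show ?thesis unfolding bs_def WW_def .
qed


lemma key:
  assumes "even p" "p \<ge> 2" "\<tau> \<in> {1..p}" "\<tau> dvd p" "even (p div \<tau>)"
   "length y = length x" "even (length x)" "length x \<ge> 2"
   "\<forall>k. k dvd p \<longrightarrow> (PP k x \<longleftrightarrow> PP k y)"
   "PP \<tau> x \<Longrightarrow> \<bar>WW \<tau> x\<bar> = \<bar>WW \<tau> y\<bar>"
  shows "mu_p_tau p \<tau> x = mu_p_tau p \<tau> y"
proof -
  have "{k\<in>{1..p}. k dvd p \<and> PP k x} = {k\<in>{1..p}. k dvd p \<and> PP k y}"
    using assms(9) by blast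
  moreover have "length x > 0" "length y > 0" using assms(6,8) by auto
  ultimately have te: "tau_p p x = tau_p p y" using tau_eq by metis
  show ?thesis
  proof (cases "tau_p p x = \<tau>")
    case False
    then show ?thesis using te by (simp add: mu_p_tau_def)
  next
    case True
    have l0: "length x > 0" using assms(8) by linarith
    have p1: "p \<ge> 1" using assms(2) by simp
    have px: "PP \<tau> x" using tau_PP(1)[OF l0 p1 True] .
    have py: "PP \<tau> y" using px assms(4,9) by blast
    have tp: "\<tau> > 0" using assms(3) by simp
    have "mu_q (p div \<tau>) (map (\<lambda>i. ((x!i - x!(i mod 2)) mod p) div \<tau>) [0..<length x]) = WW \<tau> x"
      using mu_eq[OF assms(1) tp assms(4,5,7,8) px] .
    moreover have "mu_q (p div \<tau>) (map (\<lambda>i. ((y!i - y!(i mod 2)) mod p) div \<tau>) [0..<length y]) = WW \<tau> y"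
      using mu_eq[OF assms(1) tp assms(4,5) _ _ py] assms(6,7,8) by simp
    ultimately show ?thesis using True te assms(10)[OF px] by (simp add: mu_p_tau_def)
  qed
qed

lemma transfer:
  assumes "length y = n" "\<forall>i<n. p dvd DD y i - E i"
  shows "k dvd p \<Longrightarrow> PP k y \<longleftrightarrow> (\<forall>i<n. k dvd E i)"
    and "2*t dvd p \<Longrightarrow> WW t y = (\<Sum>i<n. gg t (E i))"
proof -
  assume "k dvd p"
  then have "\<And>i. i < n \<Longrightarrow> k dvd DD y i \<longleftrightarrow> k dvd E i"
    using assms(2) dvd_iff_diff dvd_trans by blast
  then show "PP k y \<longleftrightarrow> (\<forall>i<n. k dvd E i)" unfolding PP_def using assms(1) by auto
next
  assume "2*t dvd p"
  then have "\<And>i. i < n \<Longrightarrow> gg t (DD y i) = gg t (E i)"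
    unfolding gg_def using assms(2) dvd_iff_diff dvd_trans by metis
  then show "WW t y = (\<Sum>i<n. gg t (E i))" unfolding WW_def using assms(1) by (intro sum.cong) auto
qed

lemma flip:
  assumes "t dvd a" "t dvd b" "\<not> 2*t dvd (b::int)"
  shows "gg t (a - b) = - gg t a"
proof -
  obtain u where u: "a = t*u" using assms(1) by blast
  obtain v where v: "b = t*v" using assms(2) by blast
  have t0: "t \<noteq> 0" using assms(3) v by auto
  have nv: "odd v" using assms(3) v by auto
  have "2*t dvd a - b \<longleftrightarrow> t*2 dvd t*(u - v)" by (simp add: u v right_diff_distrib mult.commute)
  also have "\<dots> \<longleftrightarrow> even (u - v)" using t0 by (simp add: dvd_times_left_cancel_iff)
  also have "\<dots> \<longleftrightarrow> odd u" using nv by simp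
  also have "\<dots> \<longleftrightarrow> \<not> (t*2 dvd t*u)" using t0 by (simp add: dvd_times_left_cancel_iff)
  finally show ?thesis unfolding gg_def by (auto simp: u mult.commute)
qed

lemma noflip:
  assumes "2*t dvd (b::int)"
  shows "gg t (a - b) = gg t a"
  unfolding gg_def using dvd_iff_diff[of "2*t" "a - b" a] assms by (simp add: dvd_diff_commute)

lemma sum_rot:
  assumes "(n::nat) > 0"
  shows "(\<Sum>i<n. f ((i+1) mod n)) = (\<Sum>i<n. (f i :: int))"
proof -
  obtain m where m: "n = Suc m" using assms gr0_implies_Suc by blast
  have "(\<Sum>i<Suc m. f ((i+1) mod Suc m)) = (\<Sum>i<m. f ((i+1) mod Suc m)) + f 0"
    by simp
  also have "(\<Sum>i<m. f ((i+1) mod Suc m)) = (\<Sum>i<m. f (Suc i))"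
    by (intro sum.cong) auto
  also have "(\<Sum>i<m. f (Suc i)) + f 0 = (\<Sum>i<Suc m. f i)"
    by (subst sum.lessThan_Suc_shift) simp
  finally show ?thesis unfolding m .
qed

lemma sum_split2:
  assumes "(n::nat) \<ge> 2"
  shows "(\<Sum>i<n. f i) = f 0 + f 1 + (\<Sum>i<n-2. (f (i+2) :: int))"
proof -
  obtain m where m: "n = Suc (Suc m)" using assms by (metis add_2_eq_Suc' le_add_diff_inverse2)
  show ?thesis unfolding m
    by (subst sum.lessThan_Suc_shift, subst sum.lessThan_Suc_shift) simp
qed


lemma via_E:
  assumes "even p" "p \<ge> 2" "\<tau> \<in> {1..p}" "\<tau> dvd p" "even (p div \<tau>)"
   "x \<in> Up p" "length y = length x"
   "\<forall>i<length x. p dvd DD y i - E i"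
   "\<And>k. k dvd p \<Longrightarrow> (PP k x \<longleftrightarrow> (\<forall>i<length x. k dvd E i))"
   "PP \<tau> x \<Longrightarrow> \<bar>WW \<tau> x\<bar> = \<bar>\<Sum>i<length x. gg \<tau> (E i)\<bar>"
  shows "mu_p_tau p \<tau> x = mu_p_tau p \<tau> y"
proof -
  have ev: "even (length x)" and ne: "x \<noteq> []" using assms(6) by (auto simp: Up_def)
  then have l2: "length x \<ge> 2" by (metis dvd_imp_le length_greater_0_conv)
  have tt: "2*\<tau> dvd p" using two_tau_dvd assms(4,5) by blast
  show ?thesis
  proof (rule key[OF assms(1-5,7) ev l2])
    show "\<forall>k. k dvd p \<longrightarrow> PP k x = PP k y"
      using transfer(1)[OF assms(7,8)] assms(9) by blast
    show "PP \<tau> x \<Longrightarrow> \<bar>WW \<tau> x\<bar> = \<bar>WW \<tau> y\<bar>"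
      using transfer(2)[OF assms(7,8) tt] assms(10) by simp
  qed
qed

lemma sign_cancel:
  assumes "even (n::nat)" "n > 0"
  shows "(-1::int)^(i+1) + (-1)^((i+1) mod n + 1) = 0"
proof -
  have "even ((i+1) mod n) \<longleftrightarrow> even (i+1)"
    using mod2_suc_mod[OF assms(1), of i] by (simp add: even_iff_mod_2_eq_zero)
  then show ?thesis by (cases "even i") (auto simp: minus_one_power_iff)
qed

lemma op2:
  assumes "even p" "p \<ge> 2" "\<tau> \<in> {1..p}" "\<tau> dvd p" "even (p div \<tau>)"
   "x \<in> Up p" "y = map (\<lambda>i. (x!i + (-1)^(i+1)*(x!0 - a)) mod p) [0..<length x]"
  shows "mu_p_tau p \<tau> x = mu_p_tau p \<tau> y"
proof -
  let ?n = "length x"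
  have ev: "even ?n" and ne: "?n > 0" using assms(6) by (auto simp: Up_def)
  have ly: "length y = ?n" using assms(7) by simp
  have cy: "p dvd cs y i - cs x i" if i: "i < ?n" for i
  proof -
    let ?j = "(i+1) mod ?n"
    let ?d = "x!0 - a"
    have j: "?j < ?n" using ne by simp
    have yi: "y!i = (x!i + (-1)^(i+1)*?d) mod p" using i assms(7) by simp
    have yj: "y!?j = (x!?j + (-1)^(?j+1)*?d) mod p" using j assms(7) by simp
    have "cs y i - cs x i = (y!i - (x!i + (-1)^(i+1)*?d)) + (y!?j - (x!?j + (-1)^(?j+1)*?d))
        + ((-1)^(i+1) + (-1)^(?j+1)) * ?d"
      unfolding cs_def ly by (simp add: algebra_simps)
    also have "\<dots> = (y!i - (x!i + (-1)^(i+1)*?d)) + (y!?j - (x!?j + (-1)^(?j+1)*?d))"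
      using sign_cancel[OF ev ne, of i] by simp
    finally show ?thesis unfolding yi yj by (simp add: dvd_add modp)
  qed
  show ?thesis
  proof (rule via_E[OF assms(1-6) ly, where E = "DD x"])
    show "\<forall>i<?n. p dvd DD y i - DD x i"
    proof (intro allI impI)
      fix i assume "i < ?n"
      then have "p dvd (cs y i - cs x i) - (cs y 0 - cs x 0)" using cy ne by (simp add: dvd_diff)
      then show "p dvd DD y i - DD x i" by (simp add: DD_def algebra_simps)
    qed
  qed (auto simp: PP_def WW_def)
qed


lemma op3:
  assumes "even p" "p \<ge> 2" "\<tau> \<in> {1..p}" "\<tau> dvd p" "even (p div \<tau>)"
   "x \<in> Up p" "y = map (\<lambda>i. (x!0 - x!i + a) mod p) [0..<length x]"
  shows "mu_p_tau p \<tau> x = mu_p_tau p \<tau> y"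
proof -
  let ?n = "length x"
  let ?C = "2*(x!0 + a)"
  have ev: "even ?n" and ne: "?n > 0" using assms(6) by (auto simp: Up_def)
  have ly: "length y = ?n" using assms(7) by simp
  have cy: "p dvd cs y i - (?C - cs x i)" if i: "i < ?n" for i
  proof -
    let ?j = "(i+1) mod ?n"
    have j: "?j < ?n" using ne by simp
    have yi: "y!i = (x!0 - x!i + a) mod p" using i assms(7) by simp
    have yj: "y!?j = (x!0 - x!?j + a) mod p" using j assms(7) by simp
    have eq: "cs y i - (?C - cs x i) = (y!i - (x!0 - x!i + a)) + (y!?j - (x!0 - x!?j + a))"
      unfolding cs_def ly by (simp add: algebra_simps)
    have "p dvd (y!i - (x!0 - x!i + a)) + (y!?j - (x!0 - x!?j + a))"
      unfolding yi yj by (intro dvd_add modp)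
    then show ?thesis by (simp only: eq)
  qed
  show ?thesis
  proof (rule via_E[OF assms(1-6) ly, where E = "\<lambda>i. - DD x i"])
    show "\<forall>i<?n. p dvd DD y i - (- DD x i)"
    proof (intro allI impI)
      fix i assume "i < ?n"
      then have "p dvd (cs y i - (?C - cs x i)) - (cs y 0 - (?C - cs x 0))"
        using dvd_diff[OF cy[of i] cy[of 0]] ne by simp
      moreover have "(cs y i - (?C - cs x i)) - (cs y 0 - (?C - cs x 0)) = DD y i - (- DD x i)"
        by (simp add: DD_def algebra_simps)
      ultimately show "p dvd DD y i - (- DD x i)" by simp
    qed
  qed (auto simp: PP_def WW_def gg_def)
qed

lemma op1:
  assumes "even p" "p \<ge> 2" "\<tau> \<in> {1..p}" "\<tau> dvd p" "even (p div \<tau>)"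
   "x \<in> Up p" "y = rotate1 x"
  shows "mu_p_tau p \<tau> x = mu_p_tau p \<tau> y"
proof -
  let ?n = "length x"
  have ev: "even ?n" and ne: "?n > 0" using assms(6) by (auto simp: Up_def)
  then have l2: "?n \<ge> 2" by (metis dvd_imp_le)
  have ly: "length y = ?n" using assms(7) by simp
  have cy: "cs y i = cs x ((i+1) mod ?n)" if i: "i < ?n" for i
  proof -
    have j: "(i+1) mod ?n < ?n" using ne by simp
    show ?thesis unfolding cs_def ly using i j assms(7) by (simp add: nth_rotate1)
  qed
  have m1: "1 mod ?n = 1" using l2 by simp
  define E where "E i = DD x ((i+1) mod ?n) - DD x 1" for i
  show ?thesis
  proof (rule via_E[OF assms(1-6) ly, where E = E])
    show "\<forall>i<?n. p dvd DD y i - E i"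
      using cy ne m1 by (simp add: DD_def E_def)
  next
    fix k assume "k dvd p"
    show "PP k x \<longleftrightarrow> (\<forall>i<?n. k dvd E i)"
    proof
      assume "PP k x"
      then show "\<forall>i<?n. k dvd E i" unfolding PP_def E_def using ne l2 by (simp add: dvd_diff)
    next
      assume h: "\<forall>i<?n. k dvd E i"
      show "PP k x" unfolding PP_def
      proof (intro allI impI)
        fix j assume j: "j < ?n"
        have a: "((j + ?n - 1) mod ?n + 1) mod ?n = j"
        proof (cases j)
          case 0 then show ?thesis using ne by simp
        next
          case (Suc j') then show ?thesis using j by (simp add: Suc_diff_1 ne)
        qed
        have b: "(?n - 1 + 1) mod ?n = 0" using ne by simp
        have "DD x j = E ((j + ?n - 1) mod ?n) - E (?n - 1)"
          unfolding E_def a b by (simp add: DD_def)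
        moreover have "(j + ?n - 1) mod ?n < ?n" "?n - 1 < ?n" using ne by auto
        ultimately show "k dvd DD x j" using h by (simp add: dvd_diff)
      qed
    qed
  next
    assume px: "PP \<tau> x"
    have "(\<Sum>i<?n. gg \<tau> (E i)) = (\<Sum>i<?n. gg \<tau> (DD x i - DD x 1))"
      unfolding E_def using sum_rot[OF ne, of "\<lambda>j. gg \<tau> (DD x j - DD x 1)"] by simp
    moreover have "\<bar>\<Sum>i<?n. gg \<tau> (DD x i - DD x 1)\<bar> = \<bar>WW \<tau> x\<bar>"
    proof (cases "2*\<tau> dvd DD x 1")
      case True
      then show ?thesis unfolding WW_def using noflip by simp
    next
      case False
      have "(\<Sum>i<?n. gg \<tau> (DD x i - DD x 1)) = (\<Sum>i<?n. - gg \<tau> (DD x i))"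
        using flip[OF _ _ False] px l2 unfolding PP_def by (intro sum.cong) auto
      then show ?thesis unfolding WW_def by (simp add: sum_negf)
    qed
    ultimately show "\<bar>WW \<tau> x\<bar> = \<bar>\<Sum>i<?n. gg \<tau> (E i)\<bar>" by simp
  qed
qed


lemma op4:
  assumes "even p" "p \<ge> 2" "\<tau> \<in> {1..p}" "\<tau> dvd p" "even (p div \<tau>)"
   "x \<in> Up p" "length x > 3" "y = x[1 := (- (x ! 0) + x ! 1 + x ! 2) mod p]"
  shows "mu_p_tau p \<tau> x = mu_p_tau p \<tau> y"
proof -
  let ?n = "length x"
  let ?v = "(- (x ! 0) + x ! 1 + x ! 2) mod p"
  have ly: "length y = ?n" using assms(8) by simp
  have y0: "y!0 = x!0" and y1: "y!1 = ?v" and y2: "y!2 = x!2" using assms(7,8) by auto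
  have yi: "y!i = x!i" if "i \<noteq> 1" for i using assms(8) that by simp
  have cy0: "cs y 0 = x!0 + ?v" unfolding cs_def ly using assms(7) y0 y1 by simp
  have cy1: "cs y 1 = ?v + x!2" unfolding cs_def ly using assms(7) y1 y2 by (simp add: numeral_2_eq_2)
  have cx0: "cs x 0 = x!0 + x!1" unfolding cs_def using assms(7) by simp
  have cx1: "cs x 1 = x!1 + x!2" unfolding cs_def using assms(7) by (simp add: numeral_2_eq_2)
  have cyi: "cs y i = cs x i" if "2 \<le> i" "i < ?n" for i
  proof -
    have "(i+1) mod ?n \<noteq> 1"
    proof (cases "i + 1 = ?n")
      case True then show ?thesis using assms(7) by simp
    next
      case False then show ?thesis using that by simp
    qed
    then show ?thesis unfolding cs_def ly using yi that by simp
  qed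
  define E where "E i = (if i = 0 then 0 else if i = 1 then DD x 1 else DD x i - DD x 1)" for i
  have dd0: "DD x 0 = 0" by (simp add: DD_def)
  show ?thesis
  proof (rule via_E[OF assms(1-6) ly, where E = E])
    show "\<forall>i<?n. p dvd DD y i - E i"
    proof (intro allI impI)
      fix i assume i: "i < ?n"
      show "p dvd DD y i - E i"
      proof (cases "i \<le> 1")
        case True
        then consider "i = 0" | "i = 1" by linarith
        then show ?thesis
        proof cases
          case 1 then show ?thesis by (simp add: E_def DD_def)
        next
          case 2
          have "DD y 1 - E 1 = 0" unfolding E_def DD_def cy0 cy1 cx0 cx1 by simp
          then show ?thesis using 2 by simp
        qed
      next
        case False
        have "DD y i - E i = - (?v - (- (x ! 0) + x ! 1 + x ! 2))"
          using False i unfolding E_def DD_def cy0 cx0 cx1 cyi[of i] by (simp add: cyi)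
        then show ?thesis using modp[of p "- (x ! 0) + x ! 1 + x ! 2"] by simp
      qed
    qed
  next
    fix k assume "k dvd p"
    show "PP k x \<longleftrightarrow> (\<forall>i<?n. k dvd E i)"
    proof
      assume "PP k x"
      then show "\<forall>i<?n. k dvd E i" unfolding PP_def E_def using assms(7) by (simp add: dvd_diff)
    next
      assume h: "\<forall>i<?n. k dvd E i"
      have h1: "k dvd DD x 1" using h[rule_format, of 1] assms(7) by (simp add: E_def)
      show "PP k x" unfolding PP_def
      proof (intro allI impI)
        fix j assume j: "j < ?n"
        show "k dvd DD x j"
        proof (cases "j \<le> 1")
          case True
          then consider "j = 0" | "j = 1" by linarith
          then show ?thesis using h1 dd0 by cases auto
        next
          case False
          then have "k dvd DD x j - DD x 1" using h[rule_format, OF j] by (simp add: E_def)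
          then show ?thesis using h1 dvd_iff_diff by blast
        qed
      qed
    qed
  next
    assume px: "PP \<tau> x"
    have l2: "?n \<ge> 2" using assms(7) by simp
    show "\<bar>WW \<tau> x\<bar> = \<bar>\<Sum>i<?n. gg \<tau> (E i)\<bar>"
    proof (cases "2*\<tau> dvd DD x 1")
      case True
      have "(\<Sum>i<?n. gg \<tau> (E i)) = WW \<tau> x"
        unfolding WW_def E_def using True dd0 noflip by (intro sum.cong) auto
      then show ?thesis by simp
    next
      case False
      have d1: "\<tau> dvd DD x 1" using px l2 by (simp add: PP_def)
      have s1: "(\<Sum>i<?n. gg \<tau> (E i)) = gg \<tau> 0 + gg \<tau> (DD x 1) + (\<Sum>i<?n-2. - gg \<tau> (DD x (i+2)))"
        unfolding sum_split2[OF l2, of "\<lambda>i. gg \<tau> (E i)"]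
        using flip[OF _ d1 False] px unfolding PP_def by (auto simp: E_def intro!: sum.cong)
      have s2: "WW \<tau> x = gg \<tau> 0 + gg \<tau> (DD x 1) + (\<Sum>i<?n-2. gg \<tau> (DD x (i+2)))"
        unfolding WW_def sum_split2[OF l2] dd0 ..
      have "gg \<tau> 0 = 1" "gg \<tau> (DD x 1) = -1" using False by (auto simp: gg_def)
      then show ?thesis using s1 s2 by (simp add: sum_negf)
    qed
  qed
qed

lemma step_inv:
  assumes "even p" "p \<ge> 2" "\<tau> \<in> {1..p}" "\<tau> dvd p" "even (p div \<tau>)"
   "op_step p x y"
  shows "mu_p_tau p \<tau> x = mu_p_tau p \<tau> y"
proof -
  have x: "x \<in> Up p" using assms(6) by (simp add: op_step_def)
  from assms(6) consider "y = rotate1 x"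
     | a where "y = map (\<lambda>i. (x ! i + (-1) ^ (i + 1) * (x ! 0 - a)) mod p) [0..<length x]"
     | a where "y = map (\<lambda>i. (x ! 0 - x ! i + a) mod p) [0..<length x]"
     | "length x > 3" "y = x[1 := (- (x ! 0) + x ! 1 + x ! 2) mod p]"
    unfolding op_step_def by blast
  then show ?thesis
  proof cases
    case 1 then show ?thesis using op1[OF assms(1-5) x] by blast
  next
    case 2 then show ?thesis using op2[OF assms(1-5) x] by blast
  next
    case 3 then show ?thesis using op3[OF assms(1-5) x] by blast
  next
    case 4 then show ?thesis using op4[OF assms(1-5) x] by blast
  qed
qed

theorem mainTheorem4:
  fixes p \<tau> :: int and a b :: "int list"
  assumes "even p" and "p \<ge> 2"
    and "\<tau> \<in> {1..p}" and "even \<tau>" and "\<tau> dvd p" and "even (p div \<tau>)"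
    and "a \<in> Up p" and "b \<in> Up p"
    and "equivalent p a b"
  shows "mu_p_tau p \<tau> a = mu_p_tau p \<tau> b"
proof -
  have "(symclp (op_step p))\<^sup>*\<^sup>* a b" using assms(9) by (simp add: equivalent_def equivclp_def)
  then show ?thesis
  proof (induction rule: rtranclp_induct)
    case base then show ?case by simp
  next
    case (step y z)
    then have "op_step p y z \<or> op_step p z y" by (simp add: symclp_def)
    then have "mu_p_tau p \<tau> y = mu_p_tau p \<tau> z"
      using step_inv[OF assms(1-3,5,6)] by metis
    then show ?case using step.IH by simp
  qed
qed

end
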